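(* Let $r,s,t,\ell,m$ be integers with $1 \le t \le \ell \le m$, $1 \le r \le \ell$ and $1 \le s \le t$. Then $$\mathfrak{w}_r^{(s)}(t;\ell,m) = \frac{q-1}{q}\,q^{\binom{s}{2}}\left(\frac{[m]_q!}{[m-t]_q!} - (-1)^s \frac{[m-s]_q!}{[m-t]_q!} \right)q^{s(\ell-r)}\,q^{\binom{t-s}{2}}\,{r\brack s}_q {\ell-r\brack t-s}_q.$$
   Context: $q$ is a prime power. For an $\ell\times m$ matrix $M=(m_{ij})$ over $\mathbb{F}_q$ and $1\le r\le\ell$, $\tau_r(M)=m_{11}+\cdots+m_{rr}$ and $\underline{M}_r$ is the $r\times m$ matrix of the first $r$ rows of $M$. $\mathfrak w^{(s)}_r(t;\ell,m)$ is the number of $\ell\times m$ matrices $M$ over $\mathbb{F}_q$ with $\mathrm{rk}(M)=t$, $\mathrm{rk}(\underline{M}_r)=s$ and $\tau_r(M)\ne 0$. The Gaussian factorial is $[n]_q!=\prod_{i=1}^n(q^i-1)$ (with $[0]_q!=1$), and ${n\brack k}_q$ is the Gaussian binomial coefficient, equal to $0$ if $k<0$ or $k>n$. *)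

theory Defs
  imports "Jordan_Normal_Form.DL_Rank"
begin

definition gfact :: "real \<Rightarrow> nat \<Rightarrow> real" where
  "gfact q n = (\<Prod>i\<in>{1..n}. q ^ i - 1)"

definition gbinom :: "real \<Rightarrow> nat \<Rightarrow> nat \<Rightarrow> real" where
  "gbinom q n k = (if k \<le> n then gfact q n / (gfact q k * gfact q (n - k)) else 0)"

text \<open>tau_r(M) = m_11 + ... + m_rr (0-based indices here).\<close>
definition tau :: "nat \<Rightarrow> 'a::field mat \<Rightarrow> 'a" where
  "tau r M = (\<Sum>i<r. M $$ (i, i))"

definition first_rows :: "nat \<Rightarrow> 'a mat \<Rightarrow> 'a mat" where
  "first_rows r M = mat r (dim_col M) (\<lambda>(i, j). M $$ (i, j))"

definition mrank :: "'a::field mat \<Rightarrow> nat" where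
  "mrank M = vec_space.rank (dim_row M) M"

definition wcount :: "'a::{finite,field} itself \<Rightarrow> nat \<Rightarrow> nat \<Rightarrow> nat \<Rightarrow> nat \<Rightarrow> nat \<Rightarrow> nat" where
  "wcount _ r s t l m = card {M \<in> carrier_mat l m :: 'a mat set.
      mrank M = t \<and> mrank (first_rows r M) = s \<and> tau r M \<noteq> 0}"

end

theory Submission
  imports Defs
begin

lemma card_carrier_vec: "card (carrier_vec n :: 'a::finite vec set) = card (UNIV :: 'a set) ^ n"
proof -
  have "bij_betw (\<lambda>v. restrict (($) v) {..<n}) (carrier_vec n :: 'a vec set) (PiE {..<n} (\<lambda>_. UNIV))"
  proof (rule bij_betwI[where g = "\<lambda>f. vec n f"])
    show "(\<lambda>v. restrict (($) v) {..<n}) \<in> (carrier_vec n :: 'a vec set) \<rightarrow> PiE {..<n} (\<lambda>_. UNIV)" by auto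
    show "(\<lambda>f. vec n f) \<in> PiE {..<n} (\<lambda>_. UNIV) \<rightarrow> (carrier_vec n :: 'a vec set)" by auto
    show "vec n (restrict (($) x) {..<n}) = x" if "x \<in> carrier_vec n" for x :: "'a vec"
      using that by (auto intro!: eq_vecI)
    show "restrict (($) (vec n y)) {..<n} = y" if "y \<in> PiE {..<n} (\<lambda>_. UNIV :: 'a set)" for y
      using that by (auto simp: PiE_def extensional_def restrict_def fun_eq_iff)
  qed
  then have "card (carrier_vec n :: 'a vec set) = card (PiE {..<n} (\<lambda>_. UNIV :: 'a set))"
    by (rule bij_betw_same_card)
  also have "\<dots> = card (UNIV :: 'a set) ^ n" by (simp add: card_PiE)
  finally show ?thesis .
qed

lemma finite_carrier_vec: "finite (carrier_vec n :: 'a::finite vec set)"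
proof -
  have "carrier_vec n \<subseteq> (\<lambda>f. vec n f) ` (PiE {..<n} (\<lambda>_. UNIV :: 'a set))"
  proof
    fix x :: "'a vec" assume x: "x \<in> carrier_vec n"
    have "x = vec n (restrict (($) x) {..<n})" using x by (auto intro!: eq_vecI)
    moreover have "restrict (($) x) {..<n} \<in> PiE {..<n} (\<lambda>_. UNIV)" by auto
    ultimately show "x \<in> (\<lambda>f. vec n f) ` (PiE {..<n} (\<lambda>_. UNIV :: 'a set))" by blast
  qed
  then show ?thesis by (rule finite_subset) (intro finite_imageI finite_PiE; simp)
qed

lemma finite_carrier_mat: "finite (carrier_mat n m :: 'a::finite mat set)"
proof -
  have "carrier_mat n m \<subseteq> (\<lambda>f. mat n m f) ` (PiE ({..<n} \<times> {..<m}) (\<lambda>_. UNIV :: 'a set))"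
  proof
    fix x :: "'a mat" assume x: "x \<in> carrier_mat n m"
    have "x = mat n m (restrict (\<lambda>ij. x $$ ij) ({..<n} \<times> {..<m}))" using x by (auto intro!: eq_matI)
    moreover have "restrict (\<lambda>ij. x $$ ij) ({..<n} \<times> {..<m}) \<in> PiE ({..<n} \<times> {..<m}) (\<lambda>_. UNIV)" by auto
    ultimately show "x \<in> (\<lambda>f. mat n m f) ` (PiE ({..<n} \<times> {..<m}) (\<lambda>_. UNIV :: 'a set))" by blast
  qed
  then show ?thesis by (rule finite_subset) (intro finite_imageI finite_PiE; simp)
qed

locale fvs = vec_space f_ty n for f_ty :: "'a :: {finite,field} itself" and n
begin

lemma span_list_Cons:
  assumes ws: "set ws \<subseteq> carrier_vec n" and v: "v \<in> carrier_vec n"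
  shows "span_list (v#ws) = {a \<cdot>\<^sub>v v + w | a w. w \<in> span_list ws}"
proof (rule equalityI; rule subsetI)
  fix x assume "x \<in> span_list (v#ws)"
  then obtain c where "x = lincomb_list c (v#ws)" by (auto simp: span_list_def)
  then have "x = c 0 \<cdot>\<^sub>v v + lincomb_list (c o Suc) ws" by simp
  moreover have "lincomb_list (c o Suc) ws \<in> span_list ws" by (auto simp: span_list_def)
  ultimately show "x \<in> {a \<cdot>\<^sub>v v + w | a w. w \<in> span_list ws}" by blast
next
  fix x assume "x \<in> {a \<cdot>\<^sub>v v + w | a w. w \<in> span_list ws}"
  then obtain a c where x: "x = a \<cdot>\<^sub>v v + lincomb_list c ws" by (auto simp: span_list_def)
  let ?c = "\<lambda>i. if i = 0 then a else c (i - 1)"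
  have "?c o Suc = c" by auto
  then have "lincomb_list ?c (v#ws) = x" using x by simp
  then show "x \<in> span_list (v#ws)" unfolding span_list_def by blast
qed


lemma span_list_carrier: "set ws \<subseteq> carrier_vec n \<Longrightarrow> span_list ws \<subseteq> carrier_vec n"
  using span_list_as_span span_closed by blast

lemma span_list_comb:
  assumes ws: "set ws \<subseteq> carrier_vec n" and w: "w \<in> span_list ws" and w': "w' \<in> span_list ws"
  shows "a \<cdot>\<^sub>v w + w' \<in> span_list ws"
proof -
  have 1: "a \<cdot>\<^sub>v w \<in> span (set ws)" using smult_in_span[OF ws] w span_list_as_span[OF ws] by auto
  have 2: "w' \<in> span (set ws)" using w' span_list_as_span[OF ws] by auto
  have "a \<cdot>\<^sub>v w + w' \<in> span (set ws)" using span_add1[OF ws 1 2] by simp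
  then show ?thesis using span_list_as_span[OF ws] by simp
qed

lemma zero_span_list: assumes ws: "set ws \<subseteq> carrier_vec n" shows "0\<^sub>v n \<in> span_list ws"
proof -
  have "0\<^sub>v n = lincomb (\<lambda>_. 0) {}" by simp
  then have "0\<^sub>v n \<in> span (set ws)" by (rule in_spanI) auto
  then show ?thesis using span_list_as_span[OF ws] by simp
qed

lemma span_list_Cons_in:
  assumes ws: "set ws \<subseteq> carrier_vec n" and v: "v \<in> span_list ws"
  shows "span_list (v#ws) = span_list ws"
proof -
  have vc: "v \<in> carrier_vec n" using v span_list_carrier[OF ws] by auto
  show ?thesis
  proof (rule equalityI; rule subsetI)
    fix x assume "x \<in> span_list (v#ws)"
    then obtain a w where "x = a \<cdot>\<^sub>v v + w" "w \<in> span_list ws" using span_list_Cons[OF ws vc] by auto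
    then show "x \<in> span_list ws" using span_list_comb[OF ws v] by auto
  next
    fix x assume x: "x \<in> span_list ws"
    then have "x = 0 \<cdot>\<^sub>v v + x" using vc span_list_carrier[OF ws] by auto
    then show "x \<in> span_list (v#ws)" using span_list_Cons[OF ws vc] x by blast
  qed
qed

lemma span_list_Cons_notin:
  assumes ws: "set ws \<subseteq> carrier_vec n" and vc: "v \<in> carrier_vec n" and v: "v \<notin> span_list ws"
  shows "card (span_list (v#ws)) = card (UNIV :: 'a set) * card (span_list ws)"
proof -
  have eq: "span_list (v#ws) = (\<lambda>(a,w). a \<cdot>\<^sub>v v + w) ` (UNIV \<times> span_list ws)"
    using span_list_Cons[OF ws vc] by auto
  have inj: "inj_on (\<lambda>(a,w). a \<cdot>\<^sub>v v + w) (UNIV \<times> span_list ws)"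
  proof (rule inj_onI, clarsimp)
    fix a w a' w' assume w: "w \<in> span_list ws" and w': "w' \<in> span_list ws"
      and e: "a \<cdot>\<^sub>v v + w = a' \<cdot>\<^sub>v v + w'"
    have wc: "w \<in> carrier_vec n" "w' \<in> carrier_vec n" using w w' span_list_carrier[OF ws] by auto
    have ai: "a * v $ i + w $ i = a' * v $ i + w' $ i" if "i < n" for i
    proof -
      have "(a \<cdot>\<^sub>v v + w) $ i = (a' \<cdot>\<^sub>v v + w') $ i" using e by simp
      then show ?thesis using that vc wc by simp
    qed
    show "a = a' \<and> w = w'"
    proof (cases "a = a'")
      case True
      then have "w = w'" using ai wc by (intro eq_vecI) auto
      then show ?thesis using True by simp
    next
      case False
      have "(-1) \<cdot>\<^sub>v w + w' \<in> span_list ws" by (rule span_list_comb[OF ws w w'])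
      then have "inverse (a - a') \<cdot>\<^sub>v ((-1) \<cdot>\<^sub>v w + w') + 0\<^sub>v n \<in> span_list ws"
        by (rule span_list_comb[OF ws _ zero_span_list[OF ws]])
      then have "inverse (a - a') \<cdot>\<^sub>v ((-1) \<cdot>\<^sub>v w + w') \<in> span_list ws" using wc by simp
      moreover have "inverse (a - a') \<cdot>\<^sub>v ((-1) \<cdot>\<^sub>v w + w') = v"
      proof (rule eq_vecI)
        fix i assume "i < dim_vec v"
        then have i: "i < n" using vc by auto
        have "(a - a') * v $ i = w' $ i - w $ i" using ai[OF i] by (simp add: algebra_simps)
        then show "(inverse (a - a') \<cdot>\<^sub>v ((-1) \<cdot>\<^sub>v w + w')) $ i = v $ i"
          using i wc False by (simp add: field_simps)
      qed (use wc vc in auto)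
      ultimately show ?thesis using v by simp
    qed
  qed
  have "finite (span_list ws)" using span_list_carrier[OF ws] finite_carrier_vec finite_subset by blast
  then show ?thesis unfolding eq card_image[OF inj] by (simp add: card_cartesian_product)
qed

lemma card_span_list_indpt:
  assumes "distinct ws" "set ws \<subseteq> carrier_vec n" "lin_indpt (set ws)"
  shows "card (span_list ws) = card (UNIV :: 'a set) ^ length ws"
  using assms
proof (induction ws)
  case Nil
  then show ?case using span_list_as_span[of "[]"] span_empty by simp
next
  case (Cons u ws)
  have ws: "set ws \<subseteq> carrier_vec n" and u: "u \<in> carrier_vec n" using Cons.prems by auto
  have li: "lin_indpt (set ws)" using subset_li_is_li[OF Cons.prems(3)] by auto
  have "u \<notin> span (set ws)"
  proof
    assume "u \<in> span (set ws)"
    moreover have "set (u#ws) - {u} = set ws" using Cons.prems(1) by auto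
    ultimately have "lin_dep (set (u#ws))" using lindep_span[of "set (u#ws)"] Cons.prems(2) by auto
    then show False using Cons.prems(3) by simp
  qed
  then have "u \<notin> span_list ws" using span_list_as_span[OF ws] by simp
  moreover have "card (span_list ws) = card (UNIV :: 'a set) ^ length ws"
    using Cons.IH Cons.prems li by auto
  ultimately show ?case using span_list_Cons_notin[OF ws u] by simp
qed

lemma basis_list:
  assumes S: "S \<subseteq> carrier_vec n" "finite S"
  shows "\<exists>us. set us \<subseteq> carrier_vec n \<and> length us = vectorspace.dim class_ring (span_vs S)
     \<and> span (set us) = span S \<and> distinct us \<and> lin_indpt (set us)"
proof -
  have "lin_indpt {}" unfolding lin_dep_def by auto
  then obtain U where U: "finite U" "maximal U (\<lambda>T. T \<subseteq> S \<and> lin_indpt T)"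
    using maximal_exists_superset[OF S(2), of "\<lambda>T. T \<subseteq> S \<and> lin_indpt T" "{}"] by blast
  have dim: "vectorspace.dim class_ring (span_vs S) = card U" using dim_span[OF S U(2)] .
  have "lin_indpt U" "U \<subseteq> S" by (metis U(2) maximal_def)+
  have "span U = span S"
  proof (rule ccontr)
    assume "span U \<noteq> span S"
    have "span U \<subseteq> span S" using span_is_monotone \<open>U\<subseteq>S\<close> by metis
    then have "\<not> S \<subseteq> span U" by (meson \<open>U \<subseteq> S\<close> \<open>span U \<noteq> span S\<close> S(1) span_is_submodule
      span_is_subset subset_antisym subset_trans)
    then obtain s where "s\<in>S" "s \<notin> span U" by blast
    then have "lin_indpt (U\<union>{s})" using lindep_span
      by (meson \<open>U \<subseteq> S\<close> \<open>lin_indpt U\<close> S(1) lin_dep_iff_in_span rev_subsetD span_mem subset_trans)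
    have "s\<notin>U" using \<open>U \<subseteq> S\<close> \<open>s \<notin> span U\<close> S(1) span_mem by auto
    then have "(U\<union>{s}) \<subseteq> S \<and> lin_indpt (U\<union>{s})" using \<open>U \<subseteq> S\<close> \<open>lin_indpt (U \<union> {s})\<close> \<open>s \<in> S\<close> by auto
    then have "\<not>maximal U (\<lambda>T. T \<subseteq> S \<and> lin_indpt T)"
      unfolding maximal_def using Un_subset_iff \<open>s \<notin> U\<close> insert_subset  order_refl by auto
    then show False using U by metis
  qed
  obtain us where us: "set us = U" "distinct us" using finite_distinct_list[OF U(1)] by blast
  have Uc: "U \<subseteq> carrier_vec n" using \<open>U \<subseteq> S\<close> S by auto
  have "length us = card U" using distinct_card[OF us(2)] us(1) by simp
  then show ?thesis using us Uc dim \<open>span U = span S\<close> \<open>lin_indpt U\<close> by (intro exI[of _ us]) auto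
qed

lemma card_span_dim:
  assumes S: "S \<subseteq> carrier_vec n" "finite S"
  shows "card (span S) = card (UNIV :: 'a set) ^ vectorspace.dim class_ring (span_vs S)"
proof -
  obtain us where us: "set us \<subseteq> carrier_vec n" "length us = vectorspace.dim class_ring (span_vs S)"
     "span (set us) = span S" "distinct us" "lin_indpt (set us)"
    using basis_list[OF S] by blast
  have "card (span_list us) = card (UNIV :: 'a set) ^ length us"
    using card_span_list_indpt[of us] us by auto
  moreover have "span_list us = span S" using span_list_as_span[of us] us by auto
  ultimately show ?thesis using us(2) by simp
qed

end


definition sp :: "nat \<Rightarrow> 'a::field vec set \<Rightarrow> 'a vec set" where
  "sp n S = LinearCombinations.module.span (class_ring :: 'a ring) (module_vec TYPE('a) n) S"

context fvs begin
lemma sp_eq: "sp n S = span S" by (simp add: sp_def)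
end

lemma mrank_card_cols:
  fixes M :: "'a::{finite,field} mat"
  assumes M: "M \<in> carrier_mat n m"
  shows "card (sp n (set (cols M))) = card (UNIV :: 'a set) ^ mrank M"
proof -
  interpret fvs "TYPE('a)" n .
  have "mrank M = rank M" using M by (simp add: mrank_def)
  then show ?thesis unfolding sp_eq rank_def using card_span_dim[of "set (cols M)"] M cols_dim[of M] by auto
qed

lemma factor_rank:
  fixes M :: "'a::{finite,field} mat"
  assumes M: "M \<in> carrier_mat n m"
  shows "\<exists>B C. B \<in> carrier_mat n (mrank M) \<and> C \<in> carrier_mat (mrank M) m \<and> M = B * C"
proof -
  interpret fvs "TYPE('a)" n .
  have Sc: "set (cols M) \<subseteq> carrier_vec n" using M cols_dim[of M] by auto
  obtain us where us: "set us \<subseteq> carrier_vec n" "length us = vectorspace.dim class_ring (span_vs (set (cols M)))"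
     "span (set us) = span (set (cols M))"
    using basis_list[OF Sc] by blast
  have k: "length us = mrank M" using us(2) M by (simp add: mrank_def rank_def)
  define B where "B = mat_of_cols n us"
  have B: "B \<in> carrier_mat n (mrank M)" unfolding B_def using mat_of_cols_carrier(1)[of n us] k by simp
  have cs: "col_space B = span (set (cols M))" unfolding col_space_def B_def using us by simp
  have "\<forall>j<m. \<exists>x. x \<in> carrier_vec (mrank M) \<and> B *\<^sub>v x = col M j"
  proof (intro allI impI)
    fix j assume j: "j < m"
    have "col M j \<in> set (cols M)" using j M by (auto simp: cols_def)
    then have "col M j \<in> col_space B" unfolding cs by (rule span_mem[OF Sc])
    then show "\<exists>x. x \<in> carrier_vec (mrank M) \<and> B *\<^sub>v x = col M j"
      unfolding col_space_eq[OF B] using B by auto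
  qed
  then obtain X where X: "\<And>j. j < m \<Longrightarrow> X j \<in> carrier_vec (mrank M) \<and> B *\<^sub>v X j = col M j"
    by metis
  define C where "C = mat_of_cols (mrank M) (map X [0..<m])"
  have C: "C \<in> carrier_mat (mrank M) m" unfolding C_def using mat_of_cols_carrier(1)[of "mrank M" "map X [0..<m]"] by simp
  have "M = B * C"
  proof (rule eq_matI)
    fix i j assume i: "i < dim_row (B * C)" and j: "j < dim_col (B * C)"
    have i': "i < n" and j': "j < m" using i j B C by auto
    have "col C j = X j" unfolding C_def using j' X[OF j'] by (intro eq_vecI) auto
    then have "(B * C) $$ (i, j) = (B *\<^sub>v X j) $ i" using i' j' B C by simp
    also have "\<dots> = M $$ (i, j)" using X[OF j'] i' j' M by simp
    finally show "M $$ (i, j) = (B * C) $$ (i, j)" by simp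
  qed (use B C M in auto)
  then show ?thesis using B C by blast
qed

lemma card_cols_factor:
  fixes B :: "'a::{finite,field} mat"
  assumes B: "B \<in> carrier_mat n k" and C: "C \<in> carrier_mat k m"
  shows "card (sp n (set (cols (B * C)))) \<le> card (UNIV :: 'a set) ^ k"
proof -
  interpret fvs "TYPE('a)" n .
  have BC: "B * C \<in> carrier_mat n m" using B C by simp
  have "sp n (set (cols (B * C))) = col_space (B * C)" unfolding sp_eq col_space_def ..
  also have "\<dots> \<subseteq> (\<lambda>x. B *\<^sub>v x) ` carrier_vec k"
  proof
    fix y assume "y \<in> col_space (B * C)"
    then obtain x where x: "x \<in> carrier_vec m" "(B * C) *\<^sub>v x = y"
      unfolding col_space_eq[OF BC] using BC by auto
    then have "y = B *\<^sub>v (C *\<^sub>v x)" using B C by auto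
    moreover have "C *\<^sub>v x \<in> carrier_vec k" by (rule mult_mat_vec_carrier[OF C x(1)])
    ultimately show "y \<in> (\<lambda>x. B *\<^sub>v x) ` carrier_vec k" by blast
  qed
  finally have "card (sp n (set (cols (B * C)))) \<le> card ((\<lambda>x. B *\<^sub>v x) ` carrier_vec k)"
    by (intro card_mono finite_imageI finite_carrier_vec)
  also have "\<dots> \<le> card (carrier_vec k :: 'a vec set)" by (rule card_image_le[OF finite_carrier_vec])
  finally show ?thesis by (simp add: card_carrier_vec)
qed

lemma card_rows_le_cols:
  fixes M :: "'a::{finite,field} mat"
  assumes M: "M \<in> carrier_mat n m"
  shows "card (sp m (set (rows M))) \<le> card (sp n (set (cols M)))"
proof -
  obtain B C where BC: "B \<in> carrier_mat n (mrank M)" "C \<in> carrier_mat (mrank M) m" "M = B * C"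
    using factor_rank[OF M] by blast
  have "transpose_mat M = transpose_mat C * transpose_mat B" using BC by (simp add: transpose_mult)
  then have "card (sp m (set (rows M))) = card (sp m (set (cols (transpose_mat C * transpose_mat B))))"
    by (metis cols_transpose)
  also have "\<dots> \<le> card (UNIV :: 'a set) ^ mrank M"
    by (rule card_cols_factor) (use BC in auto)
  also have "\<dots> = card (sp n (set (cols M)))" using mrank_card_cols[OF M] by simp
  finally show ?thesis .
qed

lemma mrank_card_rows:
  fixes M :: "'a::{finite,field} mat"
  assumes M: "M \<in> carrier_mat n m"
  shows "card (sp m (set (rows M))) = card (UNIV :: 'a set) ^ mrank M"
proof -
  have "card (sp n (set (rows (transpose_mat M)))) \<le> card (sp m (set (cols (transpose_mat M))))"
    by (rule card_rows_le_cols) (use M in auto)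
  then have "card (sp n (set (cols M))) \<le> card (sp m (set (rows M)))" by simp
  then show ?thesis using card_rows_le_cols[OF M] mrank_card_cols[OF M] by simp
qed



lemma card_field_gt1: "1 < card (UNIV :: 'a::{finite,field} set)"
proof -
  have "card {0 :: 'a, 1} \<le> card (UNIV :: 'a set)" by (rule card_mono) auto
  then show ?thesis by simp
qed

definition app :: "'a mat \<Rightarrow> 'a vec \<Rightarrow> 'a mat" where
  "app A v = mat (Suc (dim_row A)) (dim_col A) (\<lambda>(i,j). if i < dim_row A then A $$ (i,j) else v $ j)"

lemma app_carrier: "A \<in> carrier_mat k m \<Longrightarrow> app A v \<in> carrier_mat (Suc k) m"
  by (auto simp: app_def)

lemma app_index: "A \<in> carrier_mat k m \<Longrightarrow> i \<le> k \<Longrightarrow> j < m \<Longrightarrow>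
   app A v $$ (i,j) = (if i < k then A $$ (i,j) else v $ j)"
  by (auto simp: app_def)

lemma set_rows_app:
  assumes A: "A \<in> carrier_mat k m" and v: "v \<in> carrier_vec m"
  shows "set (rows (app A v)) = set (v # rows A)"
proof -
  have r: "row (app A v) i = (if i < k then row A i else v)" if "i \<le> k" for i
    using that A v by (intro eq_vecI) (auto simp: app_def)
  have d: "dim_row (app A v) = Suc k" using A by (simp add: app_def)
  have "set (rows (app A v)) = row (app A v) ` {0..<Suc k}" by (simp only: rows_def d set_map set_upt)
  also have "\<dots> = insert (row (app A v) k) (row (app A v) ` {0..<k})" by (simp add: atLeast0_lessThan_Suc del: upt_Suc)
  also have "\<dots> = insert v (row A ` {0..<k})" using r by (intro arg_cong2[where f=insert] image_cong) auto
  also have "\<dots> = set (v # rows A)" using A by (simp add: rows_def)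
  finally show ?thesis .
qed

lemma first_rows_app:
  assumes A: "A \<in> carrier_mat k m" and r: "r \<le> k"
  shows "first_rows r (app A v) = first_rows r A"
  using A r by (intro eq_matI) (auto simp: first_rows_def app_def)

lemma first_rows_self:
  assumes A: "A \<in> carrier_mat r m"
  shows "first_rows r A = A"
  using A by (intro eq_matI) (auto simp: first_rows_def)

lemma tau_app_le:
  assumes A: "A \<in> carrier_mat k m" and r: "r \<le> k" and km: "k \<le> m"
  shows "tau r (app A v) = tau r A"
  unfolding tau_def using A r km by (intro sum.cong) (auto simp: app_def)

lemma tau_app_Suc:
  assumes A: "A \<in> carrier_mat k m" and km: "k < m"
  shows "tau (Suc k) (app A v) = tau k A + v $ k"
proof -
  have "tau (Suc k) (app A v) = tau k (app A v) + app A v $$ (k,k)" by (simp add: tau_def)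
  moreover have "tau k (app A v) = tau k A" using tau_app_le[OF A _] km by simp
  moreover have "app A v $$ (k,k) = v $ k" using A km by (simp add: app_def)
  ultimately show ?thesis by simp
qed

lemma card_app_sum:
  fixes P :: "'a::{finite,field} mat \<Rightarrow> bool"
  shows "card {M \<in> carrier_mat (Suc k) m. P M} =
     (\<Sum>A\<in>carrier_mat k m. card {v \<in> carrier_vec m. P (app A v)})"
proof -
  let ?S = "Sigma (carrier_mat k m) (\<lambda>A. {v \<in> carrier_vec m. P (app A v)})"
  have eq: "{M \<in> carrier_mat (Suc k) m. P M} = (\<lambda>(A,v). app A v) ` ?S"
  proof (rule equalityI; rule subsetI)
    fix M assume M: "M \<in> {M \<in> carrier_mat (Suc k) m. P M}"
    have "M = app (first_rows k M) (row M k)"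
      using M by (intro eq_matI) (auto simp: app_def first_rows_def less_Suc_eq)
    moreover have "first_rows k M \<in> carrier_mat k m" using M by (auto simp: first_rows_def)
    moreover have "row M k \<in> carrier_vec m" using M by auto
    ultimately show "M \<in> (\<lambda>(A,v). app A v) ` ?S" using M by (auto intro!: image_eqI[of _ _ "(first_rows k M, row M k)"])
  next
    fix M assume "M \<in> (\<lambda>(A,v). app A v) ` ?S"
    then show "M \<in> {M \<in> carrier_mat (Suc k) m. P M}" using app_carrier by auto
  qed
  have inj: "inj_on (\<lambda>(A,v). app A v) ?S"
  proof (rule inj_onI, clarsimp)
    fix A v A' v' assume A: "A \<in> carrier_mat k m" and v: "v \<in> carrier_vec m"
      and A': "A' \<in> carrier_mat k m" and v': "v' \<in> carrier_vec m" and e: "app A v = app A' v'"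
    have "A = A'"
    proof (rule eq_matI)
      fix i j assume "i < dim_row A'" "j < dim_col A'"
      then show "A $$ (i,j) = A' $$ (i,j)" using A A' app_index[OF A, of i j v] app_index[OF A', of i j v'] e by auto
    qed (use A A' in auto)
    moreover have "v = v'"
    proof (rule eq_vecI)
      fix j assume "j < dim_vec v'"
      then show "v $ j = v' $ j" using A A' v v' app_index[OF A, of k j v] app_index[OF A', of k j v'] e by auto
    qed (use v v' in auto)
    ultimately show "A = A' \<and> v = v'" by simp
  qed
  have "card {M \<in> carrier_mat (Suc k) m. P M} = card ?S" unfolding eq by (rule card_image[OF inj])
  also have "\<dots> = (\<Sum>A\<in>carrier_mat k m. card {v \<in> carrier_vec m. P (app A v)})"
    by (rule card_SigmaI) (auto intro: finite_carrier_mat finite_subset[OF _ finite_carrier_vec])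
  finally show ?thesis .
qed

lemma mrank_app:
  fixes A :: "'a::{finite,field} mat"
  assumes A: "A \<in> carrier_mat k m" and v: "v \<in> carrier_vec m"
  shows "mrank (app A v) = (if v \<in> sp m (set (rows A)) then mrank A else Suc (mrank A))"
proof -
  interpret fvs "TYPE('a)" m .
  have R: "set (rows A) \<subseteq> carrier_vec m" using A rows_carrier[of A] by auto
  have q: "1 < card (UNIV :: 'a set)" by (rule card_field_gt1)
  have c1: "card (span_list (v # rows A)) = card (UNIV :: 'a set) ^ mrank (app A v)"
    using mrank_card_rows[OF app_carrier[OF A, of v]] set_rows_app[OF A v] span_list_as_span[of "v # rows A"] R v
    by (simp add: sp_eq)
  have c0: "card (span_list (rows A)) = card (UNIV :: 'a set) ^ mrank A"
    using mrank_card_rows[OF A] span_list_as_span[OF R] by (simp add: sp_eq)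
  show ?thesis
  proof (cases "v \<in> sp m (set (rows A))")
    case True
    then have "v \<in> span_list (rows A)" using span_list_as_span[OF R] by (simp add: sp_eq)
    then have "card (UNIV :: 'a set) ^ mrank (app A v) = card (UNIV :: 'a set) ^ mrank A"
      using c1 c0 span_list_Cons_in[OF R] by simp
    then show ?thesis using True q power_inject_exp by auto
  next
    case False
    then have "v \<notin> span_list (rows A)" using span_list_as_span[OF R] by (simp add: sp_eq)
    then have "card (UNIV :: 'a set) ^ mrank (app A v) = card (UNIV :: 'a set) ^ Suc (mrank A)"
      using c1 c0 span_list_Cons_notin[OF R v] by simp
    then show ?thesis using False q power_inject_exp by (metis)
  qed
qed



lemma fibre_card:
  fixes U :: "'a::{finite,field} vec set"
  assumes U: "U \<subseteq> carrier_vec m" and e: "e \<in> carrier_vec m" "j < m" "e $ j \<noteq> 0"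
    and cl: "\<And>u a. u \<in> U \<Longrightarrow> u + a \<cdot>\<^sub>v e \<in> U"
  shows "card {u \<in> U. u $ j = c} * card (UNIV :: 'a set) = card U"
proof -
  have finU: "finite U" using U finite_carrier_vec finite_subset by blast
  define F where "F c = {u \<in> U. u $ j = c}" for c
  have le: "card (F c) \<le> card (F c')" for c c'
  proof -
    let ?f = "\<lambda>u. u + ((c' - c) / e $ j) \<cdot>\<^sub>v e"
    have "inj_on ?f (F c)"
    proof (rule inj_onI)
      fix x y assume x: "x \<in> F c" and y: "y \<in> F c" and xy: "?f x = ?f y"
      have xc: "x \<in> carrier_vec m" "y \<in> carrier_vec m" using x y U by (auto simp: F_def)
      show "x = y"
      proof (rule eq_vecI)
        fix i assume i: "i < dim_vec y"
        have "?f x $ i = ?f y $ i" using xy by simp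
        then show "x $ i = y $ i" using i xc e by simp
      qed (use xc in auto)
    qed
    moreover have "?f ` F c \<subseteq> F c'"
    proof
      fix z assume "z \<in> ?f ` F c"
      then obtain x where x: "x \<in> F c" "z = ?f x" by blast
      have xc: "x \<in> carrier_vec m" using x U by (auto simp: F_def)
      have "z $ j = c'" using x xc e by (simp add: F_def field_simps)
      moreover have "z \<in> U" using x cl by (auto simp: F_def)
      ultimately show "z \<in> F c'" by (simp add: F_def)
    qed
    moreover have "finite (F c')" using finU by (simp add: F_def)
    ultimately show ?thesis by (meson card_inj_on_le)
  qed
  have eqc: "card (F c') = card (F c)" for c' using le[of c c'] le[of c' c] by simp
  have "U = (\<Union>c'\<in>UNIV. F c')" by (auto simp: F_def)
  moreover have "card (\<Union>c'\<in>UNIV. F c') = (\<Sum>c'\<in>UNIV. card (F c'))"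
    by (rule card_UN_disjoint) (auto simp: F_def intro: finite_subset[OF _ finU])
  ultimately have "card U = (\<Sum>c'\<in>UNIV. card (F c'))" by simp
  also have "\<dots> = (\<Sum>c'\<in>(UNIV :: 'a set). card (F c))" using eqc by (intro sum.cong) auto
  also have "\<dots> = card (UNIV :: 'a set) * card (F c)" by simp
  finally show ?thesis by (simp add: F_def)
qed

lemma fibre_ne:
  fixes U :: "'a::{finite,field} vec set"
  assumes U: "U \<subseteq> carrier_vec m" and e: "e \<in> carrier_vec m" "j < m" "e $ j \<noteq> 0"
    and cl: "\<And>u a. u \<in> U \<Longrightarrow> u + a \<cdot>\<^sub>v e \<in> U"
  shows "real (card {u \<in> U. u $ j \<noteq> d}) = (real (card (UNIV :: 'a set)) - 1) / real (card (UNIV :: 'a set)) * real (card U)"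
proof -
  have finU: "finite U" using U finite_carrier_vec finite_subset by blast
  have "{u \<in> U. u $ j \<noteq> d} = U - {u \<in> U. u $ j = d}" by auto
  then have "card {u \<in> U. u $ j \<noteq> d} = card U - card {u \<in> U. u $ j = d}"
    using finU by (simp add: card_Diff_subset)
  moreover have "card {u \<in> U. u $ j = d} \<le> card U" using finU by (intro card_mono) auto
  ultimately have "real (card {u \<in> U. u $ j \<noteq> d}) = real (card U) - real (card {u \<in> U. u $ j = d})"
    by simp
  moreover have "real (card {u \<in> U. u $ j = d} * card (UNIV :: 'a set)) = real (card U)"
    using fibre_card[OF assms, of d] by presburger
  then have "real (card {u \<in> U. u $ j = d}) * real (card (UNIV :: 'a set)) = real (card U)"
    by (simp only: of_nat_mult)
  moreover have "real (card (UNIV :: 'a set)) > 0" using card_field_gt1[where 'a='a] by simp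
  ultimately show ?thesis
  proof -
    fix X U' F q :: real
    have key: "X = U' - F \<Longrightarrow> F * q = U' \<Longrightarrow> q > 0 \<Longrightarrow> X = (q - 1) / q * U'" for X U' F q :: real
    proof -
      assume a: "X = U' - F" "F * q = U'" "q > 0"
      have "(q - 1) / q * U' = (q - 1) * F" using a(2,3) by (simp add: field_simps)
      then show ?thesis using a(1,2) by (simp add: algebra_simps)
    qed
    show ?thesis
      by (rule key) (use \<open>real (card {u \<in> U. u $ j \<noteq> d}) = real (card U) - real (card {u \<in> U. u $ j = d})\<close>
        \<open>real (card {u \<in> U. u $ j = d}) * real (card (UNIV :: 'a set)) = real (card U)\<close>
        \<open>real (card (UNIV :: 'a set)) > 0\<close> in auto)
  qed
qed

lemma card_all_ne:
  assumes j: "j < m"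
  shows "real (card {u \<in> (carrier_vec m :: 'a::{finite,field} vec set). u $ j \<noteq> d}) =
    (real (card (UNIV :: 'a set)) - 1) / real (card (UNIV :: 'a set)) * real (card (UNIV :: 'a set)) ^ m"
proof -
  have "real (card {u \<in> (carrier_vec m :: 'a vec set). u $ j \<noteq> d}) =
    (real (card (UNIV :: 'a set)) - 1) / real (card (UNIV :: 'a set)) * real (card (carrier_vec m :: 'a vec set))"
    by (rule fibre_ne[of "carrier_vec m" m "unit_vec m j" j d]) (use j in auto)
  then show ?thesis by (simp add: card_carrier_vec)
qed

context fvs begin

lemma span_list_zero_coord:
  assumes ws: "set ws \<subseteq> carrier_vec n" and j: "j < n" and z: "\<forall>w \<in> set ws. w $ j = 0"
  shows "\<forall>u \<in> span_list ws. u $ j = 0"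
  using ws z
proof (induction ws)
  case Nil
  then show ?case using span_list_as_span[of "[]"] span_empty j by simp
next
  case (Cons v ws)
  have ws: "set ws \<subseteq> carrier_vec n" and v: "v \<in> carrier_vec n" using Cons.prems by auto
  show ?case
  proof
    fix u assume "u \<in> span_list (v # ws)"
    then obtain a w where u: "u = a \<cdot>\<^sub>v v + w" and w: "w \<in> span_list ws" using span_list_Cons[OF ws v] by auto
    have "w $ j = 0" using Cons w by auto
    moreover have "w \<in> carrier_vec n" using w span_list_carrier[OF ws] by auto
    ultimately show "u $ j = 0" using u v j Cons.prems by simp
  qed
qed

end

definition cz :: "'a::zero mat \<Rightarrow> nat \<Rightarrow> bool" where
  "cz A j = (\<forall>i < dim_row A. A $$ (i, j) = 0)"

lemma card_in_ne:
  fixes A :: "'a::{finite,field} mat"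
  assumes A: "A \<in> carrier_mat k m" and j: "j < m"
  shows "real (card {a \<in> carrier_vec m. a \<in> sp m (set (rows A)) \<and> a $ j \<noteq> d}) =
    (if cz A j then (if d \<noteq> 0 then real (card (UNIV :: 'a set)) ^ mrank A else 0)
     else (real (card (UNIV :: 'a set)) - 1) / real (card (UNIV :: 'a set)) * real (card (UNIV :: 'a set)) ^ mrank A)"
proof -
  interpret fvs "TYPE('a)" m .
  have R: "set (rows A) \<subseteq> carrier_vec m" using A rows_carrier[of A] by auto
  let ?U = "sp m (set (rows A))"
  have U: "?U = span_list (rows A)" using span_list_as_span[OF R] by (simp add: sp_eq)
  have Uc: "?U \<subseteq> carrier_vec m" using U span_list_carrier[OF R] by simp
  have set_eq: "{a \<in> carrier_vec m. a \<in> ?U \<and> a $ j \<noteq> d} = {u \<in> ?U. u $ j \<noteq> d}" using Uc by auto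
  have cardU: "card ?U = card (UNIV :: 'a set) ^ mrank A" using mrank_card_rows[OF A] .
  show ?thesis
  proof (cases "cz A j")
    case True
    then have "\<forall>w \<in> set (rows A). w $ j = 0" using A j by (auto simp: cz_def rows_def)
    then have "\<forall>u \<in> ?U. u $ j = 0" using span_list_zero_coord[OF R] j U by (simp add: sp_eq)
    then have "{u \<in> ?U. u $ j \<noteq> d} = (if d \<noteq> 0 then ?U else {})" by auto
    then show ?thesis using True set_eq cardU by simp
  next
    case False
    then obtain i where i: "i < k" "A $$ (i,j) \<noteq> 0" using A by (auto simp: cz_def)
    let ?e = "row A i"
    have e: "?e \<in> carrier_vec m" "?e $ j \<noteq> 0" using i A j by auto
    have eU: "?e \<in> span_list (rows A)"
      using span_mem[OF R, of ?e] i A span_list_as_span[OF R] by (auto simp: rows_def)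
    have cl: "u + a \<cdot>\<^sub>v ?e \<in> ?U" if "u \<in> ?U" for u a
    proof -
      have "a \<cdot>\<^sub>v ?e + u \<in> span_list (rows A)" using span_list_comb[OF R eU] that U by simp
      moreover have "a \<cdot>\<^sub>v ?e + u = u + a \<cdot>\<^sub>v ?e" using that Uc e by (intro comm_add_vec) auto
      ultimately show ?thesis using U by simp
    qed
    show ?thesis using fibre_ne[OF Uc e(1) j e(2) cl, of d] False set_eq cardU by simp
  qed
qed

lemma card_out_ne:
  fixes A :: "'a::{finite,field} mat"
  assumes A: "A \<in> carrier_mat k m" and j: "j < m"
  shows "real (card {a \<in> carrier_vec m. a \<notin> sp m (set (rows A)) \<and> a $ j \<noteq> d}) =
    (real (card (UNIV :: 'a set)) - 1) / real (card (UNIV :: 'a set)) * real (card (UNIV :: 'a set)) ^ m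
    - real (card {a \<in> carrier_vec m. a \<in> sp m (set (rows A)) \<and> a $ j \<noteq> d})"
proof -
  have eq: "{a \<in> carrier_vec m. a \<notin> sp m (set (rows A)) \<and> a $ j \<noteq> d} =
     {a \<in> carrier_vec m. a $ j \<noteq> d} - {a \<in> carrier_vec m. a \<in> sp m (set (rows A)) \<and> a $ j \<noteq> d}" by auto
  have "card {a \<in> carrier_vec m. a \<notin> sp m (set (rows A)) \<and> a $ j \<noteq> d} =
     card {a \<in> (carrier_vec m :: 'a vec set). a $ j \<noteq> d} - card {a \<in> carrier_vec m. a \<in> sp m (set (rows A)) \<and> a $ j \<noteq> d}"
    unfolding eq by (rule card_Diff_subset) (auto intro: finite_subset[OF _ finite_carrier_vec])
  moreover have "card {a \<in> carrier_vec m. a \<in> sp m (set (rows A)) \<and> a $ j \<noteq> d} \<le> card {a \<in> (carrier_vec m :: 'a vec set). a $ j \<noteq> d}"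
    by (intro card_mono finite_subset[OF _ finite_carrier_vec]) auto
  ultimately show ?thesis using card_all_ne[OF j, of d] by (simp add: of_nat_diff)
qed

lemma card_in:
  fixes A :: "'a::{finite,field} mat"
  assumes A: "A \<in> carrier_mat k m"
  shows "card {a \<in> carrier_vec m. a \<in> sp m (set (rows A))} = card (UNIV :: 'a set) ^ mrank A"
proof -
  interpret fvs "TYPE('a)" m .
  have R: "set (rows A) \<subseteq> carrier_vec m" using A rows_carrier[of A] by auto
  have "sp m (set (rows A)) \<subseteq> carrier_vec m"
    using span_list_as_span[OF R] span_list_carrier[OF R] by (simp add: sp_eq)
  then have "{a \<in> carrier_vec m. a \<in> sp m (set (rows A))} = sp m (set (rows A))" by auto
  then show ?thesis using mrank_card_rows[OF A] by simp
qed

lemma card_out: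
  fixes A :: "'a::{finite,field} mat"
  assumes A: "A \<in> carrier_mat k m"
  shows "real (card {a \<in> carrier_vec m. a \<notin> sp m (set (rows A))}) =
     real (card (UNIV :: 'a set)) ^ m - real (card (UNIV :: 'a set)) ^ mrank A"
proof -
  have eq: "{a \<in> carrier_vec m. a \<notin> sp m (set (rows A))} = carrier_vec m - {a \<in> carrier_vec m. a \<in> sp m (set (rows A))}" by auto
  have "card {a \<in> carrier_vec m. a \<notin> sp m (set (rows A))} = card (carrier_vec m :: 'a vec set) - card {a \<in> carrier_vec m. a \<in> sp m (set (rows A))}"
    unfolding eq by (rule card_Diff_subset) (auto intro: finite_subset[OF _ finite_carrier_vec])
  moreover have "card {a \<in> carrier_vec m. a \<in> sp m (set (rows A))} \<le> card (carrier_vec m :: 'a vec set)"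
    by (intro card_mono finite_subset[OF _ finite_carrier_vec]) auto
  ultimately show ?thesis using card_in[OF A] by (simp add: card_carrier_vec of_nat_diff)
qed



definition ins :: "nat \<Rightarrow> 'a::zero mat \<Rightarrow> 'a mat" where
  "ins r B = mat (dim_row B) (Suc (dim_col B)) (\<lambda>(i,c). if c < r then B $$ (i,c) else if c = r then 0 else B $$ (i, c - 1))"

definition del :: "nat \<Rightarrow> 'a mat \<Rightarrow> 'a mat" where
  "del r A = mat (dim_row A) (dim_col A - 1) (\<lambda>(i,c). A $$ (i, if c < r then c else Suc c))"

lemma ins_carrier: "B \<in> carrier_mat k m' \<Longrightarrow> ins r B \<in> carrier_mat k (Suc m')"
  by (auto simp: ins_def)

lemma del_carrier: "A \<in> carrier_mat k (Suc m') \<Longrightarrow> del r A \<in> carrier_mat k m'"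
  by (auto simp: del_def)

lemma ins_del: "A \<in> carrier_mat k (Suc m') \<Longrightarrow> r \<le> m' \<Longrightarrow> cz A r \<Longrightarrow> ins r (del r A) = A"
  by (intro eq_matI) (auto simp: ins_def del_def cz_def)

lemma del_ins: "B \<in> carrier_mat k m' \<Longrightarrow> del r (ins r B) = B"
  by (intro eq_matI) (auto simp: ins_def del_def)

lemma cz_ins: "B \<in> carrier_mat k m' \<Longrightarrow> r \<le> m' \<Longrightarrow> cz (ins r B) r"
  by (auto simp: ins_def cz_def)

lemma tau_ins: "B \<in> carrier_mat r m' \<Longrightarrow> r \<le> m' \<Longrightarrow> tau r (ins r B) = tau r B"
  unfolding tau_def by (intro sum.cong) (auto simp: ins_def)

lemma set_cols_ins:
  assumes B: "B \<in> carrier_mat k m'" and r: "r \<le> m'"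
  shows "set (cols (ins r B)) = set (0\<^sub>v k # cols B)"
proof -
  have c: "col (ins r B) c = (if c < r then col B c else if c = r then 0\<^sub>v k else col B (c - 1))"
    if "c < Suc m'" for c
    using that B r by (intro eq_vecI) (auto simp: ins_def)
  have d: "dim_col (ins r B) = Suc m'" using B by (simp add: ins_def)
  have "set (cols (ins r B)) = col (ins r B) ` {0..<Suc m'}" by (simp only: cols_def d set_map set_upt)
  also have "\<dots> = insert (0\<^sub>v k) (col B ` {0..<m'})"
  proof (rule equalityI; rule subsetI)
    fix x assume "x \<in> col (ins r B) ` {0..<Suc m'}"
    then obtain c where cc: "c < Suc m'" "x = col (ins r B) c" by auto
    show "x \<in> insert (0\<^sub>v k) (col B ` {0..<m'})"
    proof (cases "c < r")
      case True then show ?thesis using cc c r by auto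
    next
      case False
      then show ?thesis using cc c[OF cc(1)] r by (cases "c = r") auto
    qed
  next
    fix x assume "x \<in> insert (0\<^sub>v k) (col B ` {0..<m'})"
    then consider "x = 0\<^sub>v k" | c where "c < m'" "x = col B c" by auto
    then show "x \<in> col (ins r B) ` {0..<Suc m'}"
    proof cases
      case 1 then show ?thesis using c[of r] r by (auto intro!: image_eqI[of _ _ r])
    next
      case 2
      show ?thesis
      proof (cases "c < r")
        case True then show ?thesis using 2 c[of c] by (auto intro!: image_eqI[of _ _ c])
      next
        case False then show ?thesis using 2 c[of "Suc c"] by (auto intro!: image_eqI[of _ _ "Suc c"])
      qed
    qed
  qed
  also have "\<dots> = set (0\<^sub>v k # cols B)" using B by (simp only: cols_def set_map set_upt list.set carrier_matD)
  finally show ?thesis .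
qed

lemma mrank_ins:
  fixes B :: "'a::{finite,field} mat"
  assumes B: "B \<in> carrier_mat k m'" and r: "r \<le> m'"
  shows "mrank (ins r B) = mrank B"
proof -
  interpret fvs "TYPE('a)" k .
  have C: "set (cols B) \<subseteq> carrier_vec k" using B cols_dim[of B] by auto
  have "sp k (set (cols (ins r B))) = span_list (0\<^sub>v k # cols B)"
    using set_cols_ins[OF B r] span_list_as_span[of "0\<^sub>v k # cols B"] C by (simp add: sp_eq)
  also have "\<dots> = span_list (cols B)" by (rule span_list_Cons_in[OF C zero_span_list[OF C]])
  also have "\<dots> = sp k (set (cols B))" using span_list_as_span[OF C] by (simp add: sp_eq)
  finally have "card (UNIV :: 'a set) ^ mrank (ins r B) = card (UNIV :: 'a set) ^ mrank B"
    using mrank_card_cols[OF ins_carrier[OF B, of r]] mrank_card_cols[OF B] by simp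
  then show ?thesis using card_field_gt1[where 'a='a] power_inject_exp by metis
qed

lemma card_cz:
  fixes P :: "'a::{finite,field} mat \<Rightarrow> bool"
  assumes r: "r \<le> m'"
  shows "card {A \<in> carrier_mat k (Suc m'). cz A r \<and> P A} = card {B \<in> carrier_mat k m'. P (ins r B)}"
proof -
  have eq: "{A \<in> carrier_mat k (Suc m'). cz A r \<and> P A} = ins r ` {B \<in> carrier_mat k m'. P (ins r B)}"
  proof (rule equalityI; rule subsetI)
    fix A assume A: "A \<in> {A \<in> carrier_mat k (Suc m'). cz A r \<and> P A}"
    then have "A = ins r (del r A)" using ins_del[of A k m' r] r by auto
    moreover have "del r A \<in> carrier_mat k m'" using A del_carrier by auto
    ultimately show "A \<in> ins r ` {B \<in> carrier_mat k m'. P (ins r B)}" using A by (auto intro!: image_eqI[of _ _ "del r A"])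
  next
    fix A assume "A \<in> ins r ` {B \<in> carrier_mat k m'. P (ins r B)}"
    then show "A \<in> {A \<in> carrier_mat k (Suc m'). cz A r \<and> P A}" using ins_carrier cz_ins[OF _ r] by auto
  qed
  have "inj_on (ins r) {B \<in> carrier_mat k m'. P (ins r B)}"
    by (rule inj_on_inverseI[where g = "del r"]) (auto simp: del_ins)
  then show ?thesis unfolding eq by (rule card_image)
qed

definition Ncnt :: "'a::{finite,field} itself \<Rightarrow> nat \<Rightarrow> nat \<Rightarrow> nat \<Rightarrow> nat" where
  "Ncnt _ a b k = card {M \<in> carrier_mat a b :: 'a mat set. mrank M = k}"

definition Fcnt :: "'a::{finite,field} itself \<Rightarrow> nat \<Rightarrow> nat \<Rightarrow> nat \<Rightarrow> nat" where
  "Fcnt _ r m s = card {M \<in> carrier_mat r m :: 'a mat set. mrank M = s \<and> tau r M \<noteq> 0}"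

lemma sum_if_card:
  assumes "finite S"
  shows "(\<Sum>x\<in>S. if P x then (c::real) else 0) = c * real (card {x\<in>S. P x})"
proof -
  have "(\<Sum>x\<in>S. if P x then c else 0) = (\<Sum>x\<in>{x\<in>S. P x}. c)"
    using sum.inter_filter[OF assms, of "\<lambda>_. c" P] by simp
  then show ?thesis by simp
qed

lemma Ncnt_Suc:
  fixes ty :: "'a::{finite,field} itself"
  defines "q \<equiv> real (card (UNIV :: 'a set))"
  shows "real (Ncnt ty (Suc a) b k) = q ^ k * real (Ncnt ty a b k)
     + (if k > 0 then (q ^ b - q ^ (k - 1)) * real (Ncnt ty a b (k - 1)) else 0)"
proof -
  have per: "real (card {v \<in> carrier_vec b. mrank (app A v) = k}) =
     (if mrank A = k then q ^ k else 0) + (if mrank A = k - 1 \<and> k > 0 then q ^ b - q ^ (k - 1) else 0)"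
    if A: "A \<in> carrier_mat a b" for A :: "'a mat"
  proof -
    have e: "{v \<in> carrier_vec b. mrank (app A v) = k} =
      (if mrank A = k then {v \<in> carrier_vec b. v \<in> sp b (set (rows A))}
       else if Suc (mrank A) = k then {v \<in> carrier_vec b. v \<notin> sp b (set (rows A))} else {})"
      using mrank_app[OF A] by (auto split: if_splits)
    show ?thesis
      using card_in[OF A] card_out[OF A] unfolding e q_def by auto
  qed
  have "real (Ncnt ty (Suc a) b k) = (\<Sum>A\<in>(carrier_mat a b :: 'a mat set). real (card {v \<in> carrier_vec b. mrank (app A v) = k}))"
    unfolding Ncnt_def by (simp add: card_app_sum)
  also have "\<dots> = (\<Sum>A\<in>(carrier_mat a b :: 'a mat set). (if mrank A = k then q ^ k else 0) + (if mrank A = k - 1 \<and> k > 0 then q ^ b - q ^ (k - 1) else 0))"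
    using per by (intro sum.cong) auto
  also have "\<dots> = q ^ k * real (Ncnt ty a b k) + (q ^ b - q ^ (k - 1)) * real (card {A \<in> carrier_mat a b :: 'a mat set. mrank A = k - 1 \<and> k > 0})"
    by (simp add: sum.distrib sum_if_card finite_carrier_mat Ncnt_def)
  also have "\<dots> = q ^ k * real (Ncnt ty a b k)
     + (if k > 0 then (q ^ b - q ^ (k - 1)) * real (Ncnt ty a b (k - 1)) else 0)"
    by (simp add: Ncnt_def)
  finally show ?thesis .
qed



lemma per_rank:
  fixes A :: "'a::{finite,field} mat"
  assumes A: "A \<in> carrier_mat a b"
  shows "real (card {v \<in> carrier_vec b. mrank (app A v) = k}) =
     (if mrank A = k then real (card (UNIV :: 'a set)) ^ k else 0)
   + (if mrank A = k - 1 \<and> k > 0 then real (card (UNIV :: 'a set)) ^ b - real (card (UNIV :: 'a set)) ^ (k - 1) else 0)"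
proof -
  have e: "{v \<in> carrier_vec b. mrank (app A v) = k} =
    (if mrank A = k then {v \<in> carrier_vec b. v \<in> sp b (set (rows A))}
     else if Suc (mrank A) = k then {v \<in> carrier_vec b. v \<notin> sp b (set (rows A))} else {})"
    using mrank_app[OF A] by (auto split: if_splits)
  show ?thesis
    using card_in[OF A] card_out[OF A] unfolding e by auto
qed

lemma Fcnt_Suc:
  fixes ty :: "'a::{finite,field} itself"
  defines "q \<equiv> real (card (UNIV :: 'a set))"
  assumes r: "r \<le> m'"
  shows "real (Fcnt ty (Suc r) (Suc m') s) =
     q ^ s * real (Fcnt ty r m' s)
   + (q - 1) / q * q ^ s * (real (Ncnt ty r (Suc m') s) - real (Ncnt ty r m' s))
   + (if s > 0 then (q - 1) / q * q ^ (Suc m') * real (Ncnt ty r (Suc m') (s - 1))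
        - q ^ (s - 1) * real (Fcnt ty r m' (s - 1))
        - (q - 1) / q * q ^ (s - 1) * (real (Ncnt ty r (Suc m') (s - 1)) - real (Ncnt ty r m' (s - 1)))
      else 0)"
proof -
  define g where "g A = (if mrank A = s \<and> cz A r \<and> tau r A \<noteq> 0 then q ^ s else 0)
     + (if mrank A = s \<and> \<not> cz A r then (q - 1) / q * q ^ s else 0)
     + (if mrank A = s - 1 \<and> s > 0 then (q - 1) / q * q ^ (Suc m') else 0)
     - (if mrank A = s - 1 \<and> s > 0 \<and> cz A r \<and> tau r A \<noteq> 0 then q ^ (s - 1) else 0)
     - (if mrank A = s - 1 \<and> s > 0 \<and> \<not> cz A r then (q - 1) / q * q ^ (s - 1) else 0)" for A :: "'a mat"
  have rm: "r < Suc m'" using r by simp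
  have per: "real (card {v \<in> carrier_vec (Suc m'). mrank (app A v) = s \<and> tau (Suc r) (app A v) \<noteq> 0}) = g A"
    if A: "A \<in> carrier_mat r (Suc m')" for A
  proof -
    let ?U = "sp (Suc m') (set (rows A))"
    have e: "{v \<in> carrier_vec (Suc m'). mrank (app A v) = s \<and> tau (Suc r) (app A v) \<noteq> 0} =
      (if mrank A = s then {v \<in> carrier_vec (Suc m'). v \<in> ?U \<and> v $ r \<noteq> - tau r A}
       else if Suc (mrank A) = s then {v \<in> carrier_vec (Suc m'). v \<notin> ?U \<and> v $ r \<noteq> - tau r A} else {})"
    proof -
      have t: "(tau (Suc r) (app A v) \<noteq> 0) = (v $ r \<noteq> - tau r A)" for v
        using tau_app_Suc[OF A rm, of v] add_eq_0_iff[of "tau r A" "v $ r"] by simp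
      show ?thesis using mrank_app[OF A] unfolding t by (auto split: if_splits)
    qed
    have cin: "real (card {v \<in> carrier_vec (Suc m'). v \<in> ?U \<and> v $ r \<noteq> - tau r A}) =
      (if cz A r then (if tau r A \<noteq> 0 then q ^ mrank A else 0) else (q - 1) / q * q ^ mrank A)"
      using card_in_ne[OF A rm, of "- tau r A"] unfolding q_def by simp
    have cout: "real (card {v \<in> carrier_vec (Suc m'). v \<notin> ?U \<and> v $ r \<noteq> - tau r A}) =
      (q - 1) / q * q ^ (Suc m') - (if cz A r then (if tau r A \<noteq> 0 then q ^ mrank A else 0) else (q - 1) / q * q ^ mrank A)"
      using card_out_ne[OF A rm, of "- tau r A"] cin unfolding q_def by simp
    show ?thesis
    proof (cases "mrank A = s")
      case True
      then show ?thesis unfolding e g_def using cin by auto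
    next
      case False
      show ?thesis
      proof (cases "Suc (mrank A) = s")
        case True
        then show ?thesis unfolding e g_def using cout False by auto
      next
        case False2: False
        then show ?thesis unfolding e g_def using False by auto
      qed
    qed
  qed
  have fin: "finite (carrier_mat r (Suc m') :: 'a mat set)" by (rule finite_carrier_mat)
  have "real (Fcnt ty (Suc r) (Suc m') s) =
      (\<Sum>A\<in>(carrier_mat r (Suc m') :: 'a mat set). real (card {v \<in> carrier_vec (Suc m'). mrank (app A v) = s \<and> tau (Suc r) (app A v) \<noteq> 0}))"
    unfolding Fcnt_def by (simp add: card_app_sum)
  also have "\<dots> = (\<Sum>A\<in>(carrier_mat r (Suc m') :: 'a mat set). g A)"
    using per by (intro sum.cong) auto
  also have "\<dots> = q ^ s * real (card {A \<in> (carrier_mat r (Suc m') :: 'a mat set). mrank A = s \<and> cz A r \<and> tau r A \<noteq> 0})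
     + (q - 1) / q * q ^ s * real (card {A \<in> (carrier_mat r (Suc m') :: 'a mat set). mrank A = s \<and> \<not> cz A r})
     + (q - 1) / q * q ^ (Suc m') * real (card {A \<in> (carrier_mat r (Suc m') :: 'a mat set). mrank A = s - 1 \<and> s > 0})
     - q ^ (s - 1) * real (card {A \<in> (carrier_mat r (Suc m') :: 'a mat set). mrank A = s - 1 \<and> s > 0 \<and> cz A r \<and> tau r A \<noteq> 0})
     - (q - 1) / q * q ^ (s - 1) * real (card {A \<in> (carrier_mat r (Suc m') :: 'a mat set). mrank A = s - 1 \<and> s > 0 \<and> \<not> cz A r})"
    unfolding g_def by (simp only: sum.distrib sum_subtractf sum_if_card[OF fin])
  finally have main: "real (Fcnt ty (Suc r) (Suc m') s) = \<dots>" .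
  have cz_cnt: "card {A \<in> (carrier_mat r (Suc m') :: 'a mat set). cz A r \<and> mrank A = k} = Ncnt ty r m' k" for k
  proof -
    have "card {A \<in> (carrier_mat r (Suc m') :: 'a mat set). cz A r \<and> mrank A = k}
       = card {B \<in> (carrier_mat r m' :: 'a mat set). mrank (ins r B) = k}"
      by (rule card_cz[OF r])
    also have "\<dots> = Ncnt ty r m' k" unfolding Ncnt_def
      using mrank_ins[OF _ r] by (intro arg_cong[where f = card]) auto
    finally show ?thesis .
  qed
  have czt_cnt: "card {A \<in> (carrier_mat r (Suc m') :: 'a mat set). cz A r \<and> (mrank A = k \<and> tau r A \<noteq> 0)} = Fcnt ty r m' k" for k
  proof -
    have "card {A \<in> (carrier_mat r (Suc m') :: 'a mat set). cz A r \<and> (mrank A = k \<and> tau r A \<noteq> 0)}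
       = card {B \<in> (carrier_mat r m' :: 'a mat set). mrank (ins r B) = k \<and> tau r (ins r B) \<noteq> 0}"
      by (rule card_cz[OF r])
    also have "\<dots> = Fcnt ty r m' k" unfolding Fcnt_def
    proof (intro arg_cong[where f = card] Collect_cong)
      fix B :: "'a mat"
      show "(B \<in> carrier_mat r m' \<and> mrank (ins r B) = k \<and> tau r (ins r B) \<noteq> 0) =
            (B \<in> carrier_mat r m' \<and> mrank B = k \<and> tau r B \<noteq> 0)"
        using mrank_ins[OF _ r, of B r] tau_ins[OF _ r, of B] by auto
    qed
    finally show ?thesis .
  qed
  have ncz_cnt: "real (card {A \<in> (carrier_mat r (Suc m') :: 'a mat set). mrank A = k \<and> \<not> cz A r}) =
      real (Ncnt ty r (Suc m') k) - real (Ncnt ty r m' k)" for k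
  proof -
    have eq: "{A \<in> (carrier_mat r (Suc m') :: 'a mat set). mrank A = k \<and> \<not> cz A r} =
       {A \<in> (carrier_mat r (Suc m') :: 'a mat set). mrank A = k} - {A \<in> (carrier_mat r (Suc m') :: 'a mat set). cz A r \<and> mrank A = k}" by auto
    have "card {A \<in> (carrier_mat r (Suc m') :: 'a mat set). mrank A = k \<and> \<not> cz A r} =
       card {A \<in> (carrier_mat r (Suc m') :: 'a mat set). mrank A = k} - card {A \<in> (carrier_mat r (Suc m') :: 'a mat set). cz A r \<and> mrank A = k}"
      unfolding eq by (rule card_Diff_subset) (auto intro: finite_subset[OF _ fin])
    moreover have "card {A \<in> (carrier_mat r (Suc m') :: 'a mat set). cz A r \<and> mrank A = k} \<le> card {A \<in> (carrier_mat r (Suc m') :: 'a mat set). mrank A = k}"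
      by (intro card_mono finite_subset[OF _ fin]) auto
    ultimately show ?thesis using cz_cnt[of k] unfolding Ncnt_def by (simp add: of_nat_diff)
  qed
  have c1: "card {A \<in> (carrier_mat r (Suc m') :: 'a mat set). mrank A = s \<and> cz A r \<and> tau r A \<noteq> 0} = Fcnt ty r m' s"
    using czt_cnt[of s] by (metis (no_types, lifting) Collect_cong)
  show ?thesis
  proof (cases "s > 0")
    case False
    then show ?thesis using main c1 ncz_cnt[of s] by simp
  next
    case True
    have c3: "card {A \<in> (carrier_mat r (Suc m') :: 'a mat set). mrank A = s - 1 \<and> s > 0} = Ncnt ty r (Suc m') (s - 1)"
      using True unfolding Ncnt_def by simp
    have c4: "card {A \<in> (carrier_mat r (Suc m') :: 'a mat set). mrank A = s - 1 \<and> s > 0 \<and> cz A r \<and> tau r A \<noteq> 0} = Fcnt ty r m' (s - 1)"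
      using czt_cnt[of "s - 1"] True by (metis (no_types, lifting) Collect_cong)
    have c5: "real (card {A \<in> (carrier_mat r (Suc m') :: 'a mat set). mrank A = s - 1 \<and> s > 0 \<and> \<not> cz A r}) =
      real (Ncnt ty r (Suc m') (s - 1)) - real (Ncnt ty r m' (s - 1))"
      using ncz_cnt[of "s - 1"] True by simp
    show ?thesis using main c1 ncz_cnt[of s] c3 c4 c5 True by simp
  qed
qed

lemma wcount_Suc:
  fixes ty :: "'a::{finite,field} itself"
  defines "q \<equiv> real (card (UNIV :: 'a set))"
  assumes rl: "r \<le> l" and lm: "l \<le> m"
  shows "real (wcount ty r s t (Suc l) m) = q ^ t * real (wcount ty r s t l m)
     + (if t > 0 then (q ^ m - q ^ (t - 1)) * real (wcount ty r s (t - 1) l m) else 0)"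
proof -
  define C where "C A = (mrank (first_rows r A) = s \<and> tau r A \<noteq> 0)" for A :: "'a mat"
  have fin: "finite (carrier_mat l m :: 'a mat set)" by (rule finite_carrier_mat)
  have per: "real (card {v \<in> carrier_vec m. mrank (app A v) = t \<and> mrank (first_rows r (app A v)) = s \<and> tau r (app A v) \<noteq> 0}) =
     (if mrank A = t \<and> C A then q ^ t else 0) + (if mrank A = t - 1 \<and> t > 0 \<and> C A then q ^ m - q ^ (t - 1) else 0)"
    if A: "A \<in> carrier_mat l m" for A
  proof -
    have "{v \<in> carrier_vec m. mrank (app A v) = t \<and> mrank (first_rows r (app A v)) = s \<and> tau r (app A v) \<noteq> 0}
       = (if C A then {v \<in> carrier_vec m. mrank (app A v) = t} else {})"
      using first_rows_app[OF A rl] tau_app_le[OF A rl lm] unfolding C_def by auto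
    then show ?thesis using per_rank[OF A, of t] unfolding q_def by auto
  qed
  have "real (wcount ty r s t (Suc l) m) = (\<Sum>A\<in>(carrier_mat l m :: 'a mat set).
      real (card {v \<in> carrier_vec m. mrank (app A v) = t \<and> mrank (first_rows r (app A v)) = s \<and> tau r (app A v) \<noteq> 0}))"
    unfolding wcount_def by (simp add: card_app_sum)
  also have "\<dots> = (\<Sum>A\<in>(carrier_mat l m :: 'a mat set). (if mrank A = t \<and> C A then q ^ t else 0) + (if mrank A = t - 1 \<and> t > 0 \<and> C A then q ^ m - q ^ (t - 1) else 0))"
    using per by (intro sum.cong) auto
  also have "\<dots> = q ^ t * real (card {A \<in> (carrier_mat l m :: 'a mat set). mrank A = t \<and> C A})
     + (q ^ m - q ^ (t - 1)) * real (card {A \<in> (carrier_mat l m :: 'a mat set). mrank A = t - 1 \<and> t > 0 \<and> C A})"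
    by (simp only: sum.distrib sum_if_card[OF fin])
  also have "\<dots> = q ^ t * real (wcount ty r s t l m)
     + (if t > 0 then (q ^ m - q ^ (t - 1)) * real (wcount ty r s (t - 1) l m) else 0)"
    unfolding wcount_def C_def by simp
  finally show ?thesis .
qed



lemma gfact_Suc: "gfact q (Suc n) = gfact q n * (q ^ Suc n - 1)"
  by (simp add: gfact_def atLeastAtMostSuc_conv mult.commute)

lemma gfact_0 [simp]: "gfact q 0 = 1" by (simp add: gfact_def)

lemma gfact_pos: "q > 1 \<Longrightarrow> gfact q n > 0"
proof (induction n)
  case 0 then show ?case by (simp add: gfact_def)
next
  case (Suc n)
  have "q ^ Suc n > 1" using Suc.prems by (intro one_less_power) auto
  then show ?case using Suc by (simp add: gfact_Suc)
qed

lemma gbinom_0 [simp]: "q > 1 \<Longrightarrow> gbinom q n 0 = 1"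
  using gfact_pos[of q n] by (simp add: gbinom_def)

lemma gbinom_0_Suc [simp]: "gbinom q 0 (Suc k) = 0"
  by (simp add: gbinom_def)

lemma gbinom_gt: "n < k \<Longrightarrow> gbinom q n k = 0"
  by (simp add: gbinom_def)

lemma gbinom_self: "q > 1 \<Longrightarrow> gbinom q n n = 1"
  using gfact_pos[of q n] by (simp add: gbinom_def)

lemma gbinom_Pascal:
  assumes q: "q > 1"
  shows "gbinom q (Suc n) (Suc k) = gbinom q n k + q ^ Suc k * gbinom q n (Suc k)"
proof (cases "k \<le> n")
  case False
  then show ?thesis by (simp add: gbinom_def)
next
  case True
  show ?thesis
  proof (cases "k = n")
    case True
    then show ?thesis using gbinom_self[OF q] by (simp add: gbinom_gt)
  next
    case False
    then obtain d where n: "n = k + Suc d" using True by (metis add_Suc_right le_add_diff_inverse le_neq_implies_less less_iff_Suc_add)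
    have Gp: "gfact q i > 0" for i using gfact_pos[OF q] .
    have e1: "gbinom q (Suc n) (Suc k) = gfact q (Suc n) / (gfact q (Suc k) * gfact q (Suc d))"
      using n by (simp add: gbinom_def)
    have e2: "gbinom q n k = gfact q n / (gfact q k * gfact q (Suc d))"
      using n by (simp add: gbinom_def)
    have e3: "gbinom q n (Suc k) = gfact q n / (gfact q (Suc k) * gfact q d)"
      using n by (simp add: gbinom_def)
    have id: "q ^ Suc n - 1 = (q ^ Suc k - 1) + q ^ Suc k * (q ^ Suc d - 1)"
      using n by (simp add: algebra_simps power_add)
    have gen: "Gn * c / (Gk * a * (Gd * b)) = Gn / (Gk * (Gd * b)) + Q * (Gn / (Gk * a * Gd))"
      if "Gk > 0" "Gd > 0" "a > 0" "b > 0" "c = a + Q * b" for Gn Gk Gd a b c Q :: real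
      using that by (simp add: field_simps)
    have pos: "q ^ Suc i - 1 > 0" for i
    proof -
      have "1 < q ^ Suc i" using q by (intro one_less_power) auto
      then show ?thesis by simp
    qed
    show ?thesis unfolding e1 e2 e3 gfact_Suc[of q n] gfact_Suc[of q k] gfact_Suc[of q d]
      by (rule gen[OF Gp[of k] Gp[of d] pos[of k] pos[of d] id])
  qed
qed



lemma Ncnt_0:
  fixes ty :: "'a::{finite,field} itself"
  shows "Ncnt ty 0 b k = (if k = 0 then 1 else 0)"
proof -
  have rk: "mrank M = 0" if M: "M \<in> carrier_mat 0 b" for M :: "'a mat"
  proof -
    interpret fvs "TYPE('a)" b .
    have "rows M = []" using M by (simp add: rows_def)
    then have "card (sp b (set (rows M))) = 1" using span_empty by (simp add: sp_eq)
    then have "card (UNIV :: 'a set) ^ mrank M = 1" using mrank_card_rows[OF M] by simp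
    then show ?thesis using card_field_gt1[where 'a='a] by (metis less_not_refl2 nat_power_eq_Suc_0_iff One_nat_def)
  qed
  have z: "M = 0\<^sub>m 0 b" if "M \<in> carrier_mat 0 b" for M :: "'a mat"
    using that by (intro eq_matI) auto
  have "{M \<in> carrier_mat 0 b :: 'a mat set. mrank M = k} = (if k = 0 then {0\<^sub>m 0 b} else {})"
    using rk z by auto
  then show ?thesis unfolding Ncnt_def by simp
qed

lemma Fcnt_0: "Fcnt ty 0 m s = 0"
  by (simp add: Fcnt_def tau_def)

lemma wcount_base:
  fixes ty :: "'a::{finite,field} itself"
  shows "wcount ty r s t r m = (if t = s then Fcnt ty r m s else 0)"
proof -
  have "{M \<in> carrier_mat r m :: 'a mat set. mrank M = t \<and> mrank (first_rows r M) = s \<and> tau r M \<noteq> 0}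
     = (if t = s then {M \<in> carrier_mat r m :: 'a mat set. mrank M = s \<and> tau r M \<noteq> 0} else {})"
  proof -
    have fr: "first_rows r M = M" if "M \<in> carrier_mat r m" for M :: "'a mat"
      by (rule first_rows_self[OF that])
    show ?thesis using fr by auto
  qed
  then show ?thesis unfolding wcount_def Fcnt_def by simp
qed

lemma choose2_0 [simp]: "(0::nat) choose 2 = 0"
  by (simp add: numeral_2_eq_2)

lemma choose2_Suc: "Suc j choose 2 = (j choose 2) + j"
  by (simp add: numeral_2_eq_2)

lemma Ncnt_cf:
  fixes ty :: "'a::{finite,field} itself"
  defines "q \<equiv> real (card (UNIV :: 'a set))"
  shows "real (Ncnt ty a b k) = (if k \<le> b then q ^ (k choose 2) * gbinom q a k * gfact q b / gfact q (b - k) else 0)"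
proof (induction a arbitrary: k)
  have q1: "q > 1" unfolding q_def using card_field_gt1[where 'a='a] by simp
  case 0
  show ?case
  proof (cases k)
    case 0 then show ?thesis using q1 gfact_pos[OF q1, of b] by (simp add: Ncnt_0)
  next
    case (Suc j) then show ?thesis by (simp add: Ncnt_0)
  qed
next
  case (Suc a)
  have q1: "q > 1" unfolding q_def using card_field_gt1[where 'a='a] by simp
  have Gp: "gfact q i > 0" for i using gfact_pos[OF q1] .
  show ?case
  proof (cases k)
    case 0
    then show ?thesis using Ncnt_Suc[of ty a b 0] Suc.IH[of 0] q1 unfolding q_def by simp
  next
    case (Suc j)
    have rec: "real (Ncnt ty (Suc a) b (Suc j)) = q ^ Suc j * real (Ncnt ty a b (Suc j)) + (q ^ b - q ^ j) * real (Ncnt ty a b j)"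
      using Ncnt_Suc[of ty a b "Suc j"] unfolding q_def by simp
    show ?thesis
    proof (cases "Suc j \<le> b")
      case True
      define e where "e = b - Suc j"
      have b: "b = j + Suc e" using True unfolding e_def by simp
      have be: "b - Suc j = e" "b - j = Suc e" using b by auto
      have pw: "q ^ b = q ^ j * q ^ Suc e" using b by (simp add: power_add)
      have IH1: "real (Ncnt ty a b (Suc j)) = q ^ (Suc j choose 2) * gbinom q a (Suc j) * gfact q b / gfact q e"
        using Suc.IH[of "Suc j"] True be by simp
      have IH0: "real (Ncnt ty a b j) = q ^ (j choose 2) * gbinom q a j * gfact q b / (gfact q e * (q ^ Suc e - 1))"
        using Suc.IH[of j] True be gfact_Suc[of q e] by simp
      have Xp: "q ^ Suc e - 1 > 0"
      proof -
        have "1 < q ^ Suc e" using q1 by (intro one_less_power) auto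
        then show ?thesis by simp
      qed
      have gen: "q * P * (Y * P * g1 * Gb / Ge) + (P * X - P) * (Y * g0 * Gb / (Ge * (X - 1))) = Y * P * (g0 + q * P * g1) * Gb / Ge"
        if "Ge > 0" "X - 1 > 0" for P X Y g1 g0 Gb Ge :: real
        using that by (simp add: field_simps)
      have "real (Ncnt ty (Suc a) b (Suc j)) =
          q * q ^ j * (q ^ (j choose 2) * q ^ j * gbinom q a (Suc j) * gfact q b / gfact q e)
          + (q ^ j * q ^ Suc e - q ^ j) * (q ^ (j choose 2) * gbinom q a j * gfact q b / (gfact q e * (q ^ Suc e - 1)))"
        unfolding rec IH1 IH0 choose2_Suc power_add pw by simp
      also have "\<dots> = q ^ (j choose 2) * q ^ j * (gbinom q a j + q * q ^ j * gbinom q a (Suc j)) * gfact q b / gfact q e"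
        by (rule gen[OF Gp Xp])
      also have "\<dots> = q ^ (Suc j choose 2) * gbinom q (Suc a) (Suc j) * gfact q b / gfact q (b - Suc j)"
        unfolding gbinom_Pascal[OF q1] choose2_Suc power_add be by simp
      finally show ?thesis using True Suc by simp
    next
      case False
      then have "Suc j > b" by simp
      have z1: "real (Ncnt ty a b (Suc j)) = 0" using Suc.IH[of "Suc j"] False by simp
      show ?thesis
      proof (cases "j = b")
        case True
        then show ?thesis using rec z1 False Suc by simp
      next
        case False
        then have "real (Ncnt ty a b j) = 0" using Suc.IH[of j] \<open>Suc j > b\<close> by simp
        then show ?thesis using rec z1 \<open>Suc j > b\<close> Suc by simp
      qed
    qed
  qed
qed



definition Dq :: "real \<Rightarrow> nat \<Rightarrow> nat \<Rightarrow> real" where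
  "Dq q r s = (-1) ^ s * q ^ (s choose 2) * gbinom q r s"

lemma Dq_0: "q > 1 \<Longrightarrow> Dq q r 0 = 1" by (simp add: Dq_def)

lemma Dq_0_Suc: "Dq q 0 (Suc j) = 0" by (simp add: Dq_def)

lemma Dq_Suc: "q > 1 \<Longrightarrow> Dq q (Suc r) (Suc j) = q ^ Suc j * Dq q r (Suc j) - q ^ j * Dq q r j"
  unfolding Dq_def gbinom_Pascal choose2_Suc power_add by (simp add: algebra_simps)

lemma gen_F:
  fixes F1 Fa Fb NN DD Q c W P N1 N0 M1 M0 Da Db :: real
  assumes "F1 = Q * Fa + c * Q * (N1 - N0) + (c * W * M1 - P * Fb - c * P * (M1 - M0))"
    "Fa = c * (N0 - Da)" "Fb = c * (M0 - Db)" "NN = Q * N1 + (W - P) * M1" "DD = Q * Da - P * Db"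
  shows "F1 = c * (NN - DD)"
  unfolding assms(1) assms(2) assms(3) assms(4) assms(5) by (simp add: algebra_simps)

lemma Fcnt_cf:
  fixes ty :: "'a::{finite,field} itself"
  defines "q \<equiv> real (card (UNIV :: 'a set))"
  shows "r \<le> m \<Longrightarrow> real (Fcnt ty r m s) = (q - 1) / q * (real (Ncnt ty r m s) - Dq q r s)"
proof (induction r arbitrary: m s)
  have q1: "q > 1" unfolding q_def using card_field_gt1[where 'a='a] by simp
  case 0
  show ?case by (cases s) (simp_all add: Fcnt_0 Ncnt_0 Dq_0[OF q1] Dq_0_Suc)
next
  case (Suc r)
  have q1: "q > 1" unfolding q_def using card_field_gt1[where 'a='a] by simp
  obtain m' where m: "m = Suc m'" using Suc.prems by (cases m) auto
  have r: "r \<le> m'" using Suc.prems m by simp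
  note FS = Fcnt_Suc[OF r, of ty s, folded q_def]
  show ?case
  proof (cases s)
    case 0
    have "real (Ncnt ty (Suc r) (Suc m') 0) = real (Ncnt ty r (Suc m') 0)"
      using Ncnt_Suc[of ty r "Suc m'" 0] by simp
    then show ?thesis using FS Suc.IH[OF r, of 0] 0 m Dq_0[OF q1] by (simp add: algebra_simps)
  next
    case (Suc j)
    have NS: "real (Ncnt ty (Suc r) (Suc m') (Suc j)) = q ^ Suc j * real (Ncnt ty r (Suc m') (Suc j))
       + (q ^ Suc m' - q ^ j) * real (Ncnt ty r (Suc m') j)"
      using Ncnt_Suc[of ty r "Suc m'" "Suc j", folded q_def] by simp
    have F1: "real (Fcnt ty (Suc r) (Suc m') (Suc j)) =
       q ^ Suc j * real (Fcnt ty r m' (Suc j))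
     + (q - 1) / q * q ^ Suc j * (real (Ncnt ty r (Suc m') (Suc j)) - real (Ncnt ty r m' (Suc j)))
     + ((q - 1) / q * q ^ (Suc m') * real (Ncnt ty r (Suc m') j)
        - q ^ j * real (Fcnt ty r m' j)
        - (q - 1) / q * q ^ j * (real (Ncnt ty r (Suc m') j) - real (Ncnt ty r m' j)))"
      using FS Suc by simp
    show ?thesis unfolding m Suc
      by (rule gen_F[OF F1 Suc.IH[OF r] Suc.IH[OF r] NS Dq_Suc[OF q1]])
  qed
qed

lemma wcount_cf:
  fixes ty :: "'a::{finite,field} itself"
  defines "q \<equiv> real (card (UNIV :: 'a set))"
  assumes sm0: "s \<le> m"
  shows "r + d \<le> m \<Longrightarrow> real (wcount ty r s t (r + d) m) =
    (if s \<le> t then real (Fcnt ty r m s) * q ^ (s * d) * real (Ncnt ty d (m - s) (t - s)) else 0)"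
proof (induction d arbitrary: t)
  case 0
  show ?case by (simp add: wcount_base Ncnt_0)
next
  case (Suc d)
  have rd: "r + d \<le> m" using Suc.prems by simp
  have sm: "s \<le> m" using sm0 .
  have rec: "real (wcount ty r s t (r + Suc d) m) = q ^ t * real (wcount ty r s t (r + d) m)
     + (if t > 0 then (q ^ m - q ^ (t - 1)) * real (wcount ty r s (t - 1) (r + d) m) else 0)"
    using wcount_Suc[of r "r + d" m ty s t, folded q_def] rd by simp
  consider "t < s" | "t = s" | j where "t = s + Suc j" by (metis add_Suc_right less_imp_Suc_add linorder_neqE_nat)
  then show ?case
  proof cases
    case 1
    then show ?thesis using rec Suc.IH[OF rd, of t] Suc.IH[OF rd, of "t - 1"] by simp
  next
    case 2
    have N0: "real (Ncnt ty (Suc d) (m - s) 0) = real (Ncnt ty d (m - s) 0)"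
      using Ncnt_Suc[of ty d "m - s" 0] by simp
    have z: "t > 0 \<Longrightarrow> real (wcount ty r s (t - 1) (r + d) m) = 0" using Suc.IH[OF rd, of "t - 1"] 2 by simp
    show ?thesis using rec Suc.IH[OF rd, of t] 2 N0 z by (simp add: power_add algebra_simps)
  next
    case 3
    have NS: "real (Ncnt ty (Suc d) (m - s) (Suc j)) = q ^ Suc j * real (Ncnt ty d (m - s) (Suc j))
       + (q ^ (m - s) - q ^ j) * real (Ncnt ty d (m - s) j)"
      using Ncnt_Suc[of ty d "m - s" "Suc j", folded q_def] by simp
    have I1: "real (wcount ty r s t (r + d) m) = real (Fcnt ty r m s) * q ^ (s * d) * real (Ncnt ty d (m - s) (Suc j))"
      using Suc.IH[OF rd, of t] 3 by simp
    have I0: "real (wcount ty r s (t - 1) (r + d) m) = real (Fcnt ty r m s) * q ^ (s * d) * real (Ncnt ty d (m - s) j)"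
      using Suc.IH[OF rd, of "t - 1"] 3 by simp
    have p1: "q ^ t = q ^ s * q ^ Suc j" using 3 by (simp add: power_add)
    have p2: "q ^ m = q ^ s * q ^ (m - s)" using sm by (simp add: power_add[symmetric])
    have p3: "q ^ (t - 1) = q ^ s * q ^ j" using 3 by (simp add: power_add)
    have p4: "q ^ (s * Suc d) = q ^ s * q ^ (s * d)" by (simp add: power_add)
    have "real (wcount ty r s t (r + Suc d) m) =
       q ^ s * q ^ Suc j * (real (Fcnt ty r m s) * q ^ (s * d) * real (Ncnt ty d (m - s) (Suc j)))
     + (q ^ s * q ^ (m - s) - q ^ s * q ^ j) * (real (Fcnt ty r m s) * q ^ (s * d) * real (Ncnt ty d (m - s) j))"
      using rec I1 I0 3 unfolding p1 p2 p3 by simp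
    also have "\<dots> = real (Fcnt ty r m s) * (q ^ s * q ^ (s * d)) * real (Ncnt ty (Suc d) (m - s) (Suc j))"
      unfolding NS by (simp add: algebra_simps)
    finally show ?thesis using 3 p4 by simp
  qed
qed

theorem mainTheorem16:
  fixes r s t l m :: nat
  assumes "1 \<le> t" "t \<le> l" "l \<le> m" "1 \<le> r" "r \<le> l" "1 \<le> s" "s \<le> t"
  defines "q \<equiv> real (card (UNIV :: 'a::{finite,field} set))"
  shows "real (wcount TYPE('a) r s t l m) =
    (q - 1) / q * q ^ (s choose 2) *
    (gfact q m / gfact q (m - t) - (-1) ^ s * gfact q (m - s) / gfact q (m - t)) *
    q ^ (s * (l - r)) * q ^ ((t - s) choose 2) * gbinom q r s * gbinom q (l - r) (t - s)"
proof -
  have True: "s \<le> m" using assms by simp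
  have q1: "q > 1" unfolding q_def using card_field_gt1[where 'a='a] by simp
  have Gp: "gfact q i > 0" for i using gfact_pos[OF q1] .
  have l: "l = r + (l - r)" using assms by simp
  have W: "real (wcount TYPE('a) r s t l m) = real (Fcnt TYPE('a) r m s) * q ^ (s * (l - r)) * real (Ncnt TYPE('a) (l - r) (m - s) (t - s))"
  proof -
    have "real (wcount TYPE('a) r s t (r + (l - r)) m) = real (Fcnt TYPE('a) r m s) * q ^ (s * (l - r)) * real (Ncnt TYPE('a) (l - r) (m - s) (t - s))"
      using wcount_cf[where r=r and d="l - r" and t=t and ty="TYPE('a)" and s=s and m=m, folded q_def] assms by simp
    then show ?thesis using l by simp
  qed
  have F: "real (Fcnt TYPE('a) r m s) = (q - 1) / q * (real (Ncnt TYPE('a) r m s) - Dq q r s)"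
    using Fcnt_cf[of r m "TYPE('a)" s, folded q_def] assms by simp
  have N1: "real (Ncnt TYPE('a) r m s) = q ^ (s choose 2) * gbinom q r s * gfact q m / gfact q (m - s)"
    using Ncnt_cf[of "TYPE('a)" r m s, folded q_def] assms by simp
  have N2: "real (Ncnt TYPE('a) (l - r) (m - s) (t - s)) = q ^ ((t - s) choose 2) * gbinom q (l - r) (t - s) * gfact q (m - s) / gfact q (m - t)"
  proof -
    have e1: "t - s \<le> m - s" and e2: "m - s - (t - s) = m - t" using assms by auto
    show ?thesis using Ncnt_cf[of "TYPE('a)" "l - r" "m - s" "t - s", folded q_def] e1 e2 by simp
  qed
  show ?thesis unfolding W F N1 N2 Dq_def using Gp[of "m - s"] Gp[of "m - t"] q1
    by (simp add: field_simps)
qed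


end
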